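(* Let $\Sigma\subseteq\mathcal L_\Diamond$ be finite and closed under subformulas and let $\mathcal I$ be a finite weak $\Sigma$-quasimodel such that for every deterministic weak $\mathcal L_\Diamond$-quasimodel $\mathcal A$ the relation $\rightharpoonup\ \subseteq|\mathcal I|\times|\mathcal A|$ is a surjective dynamic simulation. Let $P=\{w\in|\mathcal I|:\not\vdash\mathrm{Sim}(w)\}$. Then the restriction $\mathcal I\upharpoonright P=(P,\preccurlyeq_{\mathcal I}\cap(P\times P),S_{\mathcal I}\cap(P\times P),\ell_{\mathcal I}\upharpoonright P)$ is a (finite) $\Sigma$-quasimodel.
   Context: $\mathcal L_\Diamond$ is the propositional language with $\bot,\wedge,\vee,\to$ and unary modalities $\bigcirc$, $\Diamond$. ${\sf ITL}^0_\Diamond$ is axiomatized by all intuitionistic propositional tautologies, $\neg\bigcirc\bot$, $\bigcirc\varphi\wedge\bigcirc\psi\to\bigcirc(\varphi\wedge\psi)$, $\bigcirc(\varphi\vee\psi)\to\bigcirc\varphi\vee\bigcirc\psi$, $\bigcirc(\varphi\to\psi)\to(\bigcirc\varphi\to\bigcirc\psi)$, $\varphi\vee\bigcirc\Diamond\varphi\to\Diamond\varphi$, closed under modus ponens and the rules $\varphi/\bigcirc\varphi$, $(\varphi\to\psi)/(\Diamond\varphi\to\Diamond\psi)$, $(\bigcirc\varphi\to\varphi)/(\Diamond\varphi\to\varphi)$; $\vdash\varphi$ means $\varphi\in{\sf ITL}^0_\Diamond$. Types: a $\Sigma$-type is a pair $\Phi=(\Phi^-;\Phi^+)$ of subsets of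 $\Sigma$ with $\Phi^-\cap\Phi^+=\varnothing$, $\Phi^-\cup\Phi^+=\Sigma$, $\bot\notin\Phi^+$, $\wedge,\vee$ in $\Phi^+$ behaving classically, ($\varphi\to\psi\in\Phi^+\Rightarrow\varphi\in\Phi^-$ or $\psi\in\Phi^+$), ($\Diamond\varphi\in\Phi^-\Rightarrow\varphi\in\Phi^-$). $\Phi\preccurlyeq_T\Psi$ iff $\Phi^+\subseteq\Psi^+$; $\Phi\subseteq_T\Psi$ iff $\Phi^-\subseteq\Psi^-$, $\Phi^+\subseteq\Psi^+$. $\Phi\,S_T\,\Psi$ iff: $\bigcirc\varphi\in\Phi^+\Rightarrow\varphi\in\Psi^+$; $\bigcirc\varphi\in\Phi^-\Rightarrow\varphi\in\Psi^-$; ($\Diamond\varphi\in\Phi^+$, $\varphi\in\Phi^-$)$\Rightarrow\Diamond\varphi\in\Psi^+$; $\Diamond\varphi\in\Phi^-\Rightarrow\Diamond\varphi\in\Psi^-$. A $\Sigma$-labelled frame is $(W,\preccurlyeq,\ell)$, $\preccurlyeq$ a partial order, $\ell$ mapping to $\Sigma$-types, monotone w.r.t. $\preccurlyeq_T$, and if $\varphi\to\psi\in\ell^-(w)$ then some $v\succcurlyeq w$ has $\varphi\in\ell^+(v)$, $\psi\in\ell^-(v)$. A weak $\Sigma$-quasimodel adds $S\subseteq W\times W$ forward-confluent (if $w\preccurlyeq w'$, $w\,S\,v$ then some $v'\succcurlyeq v$ has $w'\,S\,v'$) and sensible ($w\,S\,v\Rightarrow\ell(w)\,S_T\,\ell(v)$);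 deterministic if $S$ is a function. A $\Sigma$-quasimodel is a weak $\Sigma$-quasimodel whose $S$ is also serial and $\omega$-sensible (if $\Diamond\varphi\in\ell^+(w)$ there are $n\ge0$ and $v$ with $w\,S^n\,v$ and $\varphi\in\ell^+(v)$). A simulation from a $\Sigma$-labelled $\mathcal X$ to a $\Delta$-labelled $\mathcal Y$ ($\Sigma\subseteq\Delta$) is a forward-confluent $E\subseteq|\mathcal X|\times|\mathcal Y|$ with $x\,E\,y\Rightarrow\ell(x)\subseteq_T\ell(y)$; $x\rightharpoonup y$ iff some simulation relates them; $E$ is dynamic if $x\,E\,y$ and $y\,S\,y'$ imply some $x'$ with $x\,S\,x'$, $x'\,E\,y'$; surjective if every point of $\mathcal A$ is in its range. $\mathrm{Sim}(w)=\bigwedge\ell^+(w)\to\big(\bigvee\ell^-(w)\vee\bigvee_{v\succ w}\mathrm{Sim}(v)\big)$, defined by backwards induction on $\prec$ ($\bigwedge\varnothing=\top$, $\bigvee\varnothing=\bot$). *)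

theory Defs
  imports Main
begin

datatype fm = Var nat | Bot | And fm fm | Or fm fm | Imp fm fm | Nxt fm | Dia fm

definition Top :: fm where "Top = Imp Bot Bot"

fun subf :: "fm \<Rightarrow> fm set" where
  "subf (Var n) = {Var n}"
| "subf Bot = {Bot}"
| "subf (And p q) = insert (And p q) (subf p \<union> subf q)"
| "subf (Or p q) = insert (Or p q) (subf p \<union> subf q)"
| "subf (Imp p q) = insert (Imp p q) (subf p \<union> subf q)"
| "subf (Nxt p) = insert (Nxt p) (subf p)"
| "subf (Dia p) = insert (Dia p) (subf p)"

definition sub_closed :: "fm set \<Rightarrow> bool" where
  "sub_closed \<Sigma> \<longleftrightarrow> (\<forall>\<phi>\<in>\<Sigma>. subf \<phi> \<subseteq> \<Sigma>)"

inductive prov :: "fm \<Rightarrow> bool" where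
  ipc1: "prov (Imp p (Imp q p))"
| ipc2: "prov (Imp (Imp p (Imp q r)) (Imp (Imp p q) (Imp p r)))"
| ipc3: "prov (Imp (And p q) p)"
| ipc4: "prov (Imp (And p q) q)"
| ipc5: "prov (Imp p (Imp q (And p q)))"
| ipc6: "prov (Imp p (Or p q))"
| ipc7: "prov (Imp q (Or p q))"
| ipc8: "prov (Imp (Imp p r) (Imp (Imp q r) (Imp (Or p q) r)))"
| ipc9: "prov (Imp Bot p)"
| nxt_bot: "prov (Imp (Nxt Bot) Bot)"
| nxt_and: "prov (Imp (And (Nxt p) (Nxt q)) (Nxt (And p q)))"
| nxt_or: "prov (Imp (Nxt (Or p q)) (Or (Nxt p) (Nxt q)))"
| nxt_imp: "prov (Imp (Nxt (Imp p q)) (Imp (Nxt p) (Nxt q)))"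
| dia_fix: "prov (Imp (Or p (Nxt (Dia p))) (Dia p))"
| mp: "prov (Imp p q) \<Longrightarrow> prov p \<Longrightarrow> prov q"
| nec: "prov p \<Longrightarrow> prov (Nxt p)"
| dia_mono: "prov (Imp p q) \<Longrightarrow> prov (Imp (Dia p) (Dia q))"
| dia_ind: "prov (Imp (Nxt p) p) \<Longrightarrow> prov (Imp (Dia p) p)"

type_synonym ftype = "fm set \<times> fm set"

definition is_type :: "fm set \<Rightarrow> ftype \<Rightarrow> bool" where
  "is_type \<Sigma> \<Phi> \<longleftrightarrow> (let Fm = fst \<Phi>; Fp = snd \<Phi> in
     Fm \<inter> Fp = {} \<and> Fm \<union> Fp = \<Sigma> \<and> Bot \<notin> Fp
     \<and> (\<forall>p q. And p q \<in> \<Sigma> \<longrightarrow> (And p q \<in> Fp \<longleftrightarrow> p \<in> Fp \<and> q \<in> Fp))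
     \<and> (\<forall>p q. Or p q \<in> \<Sigma> \<longrightarrow> (Or p q \<in> Fp \<longleftrightarrow> p \<in> Fp \<or> q \<in> Fp))
     \<and> (\<forall>p q. Imp p q \<in> Fp \<longrightarrow> p \<in> Fm \<or> q \<in> Fp)
     \<and> (\<forall>p. Dia p \<in> Fm \<longrightarrow> p \<in> Fm))"

definition subT :: "ftype \<Rightarrow> ftype \<Rightarrow> bool" where
  "subT \<Phi> \<Psi> \<longleftrightarrow> fst \<Phi> \<subseteq> fst \<Psi> \<and> snd \<Phi> \<subseteq> snd \<Psi>"

definition sensT :: "ftype \<Rightarrow> ftype \<Rightarrow> bool" where
  "sensT \<Phi> \<Psi> \<longleftrightarrow>
     (\<forall>p. Nxt p \<in> snd \<Phi> \<longrightarrow> p \<in> snd \<Psi>)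
   \<and> (\<forall>p. Nxt p \<in> fst \<Phi> \<longrightarrow> p \<in> fst \<Psi>)
   \<and> (\<forall>p. Dia p \<in> snd \<Phi> \<and> p \<in> fst \<Phi> \<longrightarrow> Dia p \<in> snd \<Psi>)
   \<and> (\<forall>p. Dia p \<in> fst \<Phi> \<longrightarrow> Dia p \<in> fst \<Psi>)"

record 'w kframe =
  pts :: "'w set"
  le  :: "'w \<Rightarrow> 'w \<Rightarrow> bool"
  rel :: "'w \<Rightarrow> 'w \<Rightarrow> bool"
  lab :: "'w \<Rightarrow> ftype"

definition labelled_frame :: "fm set \<Rightarrow> 'w kframe \<Rightarrow> bool" where
  "labelled_frame \<Sigma> F \<longleftrightarrow>
     (\<forall>x y. le F x y \<longrightarrow> x \<in> pts F \<and> y \<in> pts F)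
   \<and> (\<forall>x\<in>pts F. le F x x)
   \<and> (\<forall>x y z. le F x y \<and> le F y z \<longrightarrow> le F x z)
   \<and> (\<forall>x y. le F x y \<and> le F y x \<longrightarrow> x = y)
   \<and> (\<forall>w\<in>pts F. is_type \<Sigma> (lab F w))
   \<and> (\<forall>w v. le F w v \<longrightarrow> snd (lab F w) \<subseteq> snd (lab F v))
   \<and> (\<forall>w\<in>pts F. \<forall>p q. Imp p q \<in> fst (lab F w) \<longrightarrow>
         (\<exists>v\<in>pts F. le F w v \<and> p \<in> snd (lab F v) \<and> q \<in> fst (lab F v)))"

definition forward_confluent_rel :: "'w kframe \<Rightarrow> bool" where
  "forward_confluent_rel F \<longleftrightarrow>
     (\<forall>w w' v. le F w w' \<and> rel F w v \<longrightarrow> (\<exists>v'\<in>pts F. le F v v' \<and> rel F w' v'))"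

definition weak_qm :: "fm set \<Rightarrow> 'w kframe \<Rightarrow> bool" where
  "weak_qm \<Sigma> F \<longleftrightarrow> labelled_frame \<Sigma> F
     \<and> (\<forall>x y. rel F x y \<longrightarrow> x \<in> pts F \<and> y \<in> pts F)
     \<and> forward_confluent_rel F
     \<and> (\<forall>w v. rel F w v \<longrightarrow> sensT (lab F w) (lab F v))"

definition deterministic :: "'w kframe \<Rightarrow> bool" where
  "deterministic F \<longleftrightarrow> (\<forall>w\<in>pts F. \<exists>!v. rel F w v)"

definition quasimodel :: "fm set \<Rightarrow> 'w kframe \<Rightarrow> bool" where
  "quasimodel \<Sigma> F \<longleftrightarrow> weak_qm \<Sigma> F
     \<and> (\<forall>w\<in>pts F. \<exists>v. rel F w v)
     \<and> (\<forall>w\<in>pts F. \<forall>p. Dia p \<in> snd (lab F w) \<longrightarrow>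
          (\<exists>n v. (rel F ^^ n) w v \<and> p \<in> snd (lab F v)))"

definition is_simulation :: "'a kframe \<Rightarrow> 'b kframe \<Rightarrow> ('a \<Rightarrow> 'b \<Rightarrow> bool) \<Rightarrow> bool" where
  "is_simulation X Y E \<longleftrightarrow>
     (\<forall>x y. E x y \<longrightarrow> x \<in> pts X \<and> y \<in> pts Y)
   \<and> (\<forall>x x' y. E x y \<and> le X x x' \<longrightarrow> (\<exists>y'\<in>pts Y. le Y y y' \<and> E x' y'))
   \<and> (\<forall>x y. E x y \<longrightarrow> subT (lab X x) (lab Y y))"

definition simulates :: "'a kframe \<Rightarrow> 'b kframe \<Rightarrow> 'a \<Rightarrow> 'b \<Rightarrow> bool" where
  "simulates X Y x y \<longleftrightarrow> (\<exists>E. is_simulation X Y E \<and> E x y)"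

definition dynamic :: "'a kframe \<Rightarrow> 'b kframe \<Rightarrow> ('a \<Rightarrow> 'b \<Rightarrow> bool) \<Rightarrow> bool" where
  "dynamic X Y E \<longleftrightarrow> (\<forall>x y y'. E x y \<and> rel Y y y' \<longrightarrow> (\<exists>x'. rel X x x' \<and> E x' y'))"

definition surjective_sim :: "'a kframe \<Rightarrow> 'b kframe \<Rightarrow> ('a \<Rightarrow> 'b \<Rightarrow> bool) \<Rightarrow> bool" where
  "surjective_sim X Y E \<longleftrightarrow> (\<forall>y\<in>pts Y. \<exists>x. E x y)"

definition BigAnd :: "fm set \<Rightarrow> fm" where
  "BigAnd A = foldr And (SOME xs. set xs = A) Top"

definition BigOr :: "fm set \<Rightarrow> fm" where
  "BigOr A = foldr Or (SOME xs. set xs = A) Bot"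

fun simf :: "'w kframe \<Rightarrow> nat \<Rightarrow> 'w \<Rightarrow> fm" where
  "simf F 0 w = Bot"
| "simf F (Suc n) w = Imp (BigAnd (snd (lab F w)))
     (Or (BigOr (fst (lab F w))) (BigOr (simf F n ` {v\<in>pts F. le F w v \<and> v \<noteq> w})))"

text \<open>For a finite frame the recursion depth card (pts F) exceeds the height of every point,
  so this is the backwards-inductive definition of Sim(w).\<close>
definition Sim :: "'w kframe \<Rightarrow> 'w \<Rightarrow> fm" where
  "Sim F w = simf F (card (pts F)) w"

definition restrict_frame :: "'w kframe \<Rightarrow> 'w set \<Rightarrow> 'w kframe" where
  "restrict_frame F P = \<lparr> pts = P,
     le = (\<lambda>x y. x \<in> P \<and> y \<in> P \<and> le F x y),
     rel = (\<lambda>x y. x \<in> P \<and> y \<in> P \<and> rel F x y),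
     lab = lab F \<rparr>"

end

theory Submission imports Defs begin

inductive dr :: "fm set \<Rightarrow> fm \<Rightarrow> bool" for H where
  dr_hyp: "\<phi> \<in> H \<Longrightarrow> dr H \<phi>"
| dr_ax: "prov \<phi> \<Longrightarrow> dr H \<phi>"
| dr_mp: "dr H (Imp a b) \<Longrightarrow> dr H a \<Longrightarrow> dr H b"

lemma prov_id: "prov (Imp a a)"
proof -
  have "prov (Imp (Imp a (Imp (Imp a a) a)) (Imp (Imp a (Imp a a)) (Imp a a)))" by (rule ipc2)
  then have "prov (Imp (Imp a (Imp a a)) (Imp a a))" using ipc1 mp by blast
  then show ?thesis using ipc1 mp by blast
qed

lemma dr_mono: "dr H \<phi> \<Longrightarrow> H \<subseteq> H' \<Longrightarrow> dr H' \<phi>"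
  by (induction rule: dr.induct) (auto intro: dr.intros)

lemma dr_deduct: "dr (insert a H) b \<Longrightarrow> dr H (Imp a b)"
proof (induction rule: dr.induct)
  case (dr_hyp \<phi>)
  then show ?case
  proof
    assume "\<phi> = a" then show ?thesis using prov_id dr_ax by blast
  next
    assume "\<phi> \<in> H" then show ?thesis by (meson dr.intros ipc1)
  qed
next
  case (dr_ax \<phi>)
  then show ?case by (meson dr.intros ipc1)
next
  case (dr_mp c d)
  then show ?case by (meson dr.intros ipc2)
qed

lemma dr_empty: "dr {} \<phi> \<Longrightarrow> prov \<phi>"
  by (induction rule: dr.induct) (auto intro: mp)

lemma dr_prov_imp: "dr {a} b \<Longrightarrow> prov (Imp a b)"
  using dr_deduct dr_empty by blast

lemma dr_compact: "dr H \<phi> \<Longrightarrow> \<exists>F. finite F \<and> F \<subseteq> H \<and> dr F \<phi>"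
proof (induction rule: dr.induct)
  case (dr_hyp \<phi>)
  then show ?case by (intro exI[of _ "{\<phi>}"]) (auto intro: dr.intros)
next
  case (dr_ax \<phi>)
  then show ?case by (intro exI[of _ "{}"]) (auto intro: dr.intros)
next
  case (dr_mp a b)
  then obtain F1 F2 where "finite F1" "F1 \<subseteq> H" "dr F1 (Imp a b)" "finite F2" "F2 \<subseteq> H" "dr F2 a" by blast
  then show ?case
    by (intro exI[of _ "F1 \<union> F2"]) (auto intro: dr.dr_mp dr_mono)
qed

lemma dr_or_elim: "dr H (Or a b) \<Longrightarrow> dr (insert a H) c \<Longrightarrow> dr (insert b H) c \<Longrightarrow> dr H c"
  by (meson dr.intros dr_deduct ipc8)

lemma dr_ax_mp: "prov (Imp a b) \<Longrightarrow> dr H a \<Longrightarrow> dr H b"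
  by (meson dr.intros)

lemma prov_trans: "prov (Imp a b) \<Longrightarrow> prov (Imp b c) \<Longrightarrow> prov (Imp a c)"
proof -
  assume "prov (Imp a b)" "prov (Imp b c)"
  then have "dr {a} c" by (meson dr.intros singletonI)
  then show ?thesis by (rule dr_prov_imp)
qed

lemma prov_dia_intro: "prov (Imp p (Dia p))"
  using prov_trans[OF ipc6 dia_fix] .

lemma prov_dia_unfold: "prov (Imp (Dia p) (Or p (Nxt (Dia p))))"
proof -
  let ?t = "Or p (Nxt (Dia p))"
  have n1: "prov (Imp (Nxt p) (Nxt (Dia p)))"
    using nxt_imp nec[OF prov_dia_intro] mp by blast
  have "prov (Imp (Nxt (Dia p)) (Dia p))" using prov_trans[OF ipc7 dia_fix] .
  then have n2: "prov (Imp (Nxt (Nxt (Dia p))) (Nxt (Dia p)))"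
    using nxt_imp nec mp by blast
  have "dr {Nxt ?t} ?t"
  proof (rule dr_or_elim)
    show "dr {Nxt ?t} (Or (Nxt p) (Nxt (Nxt (Dia p))))"
      by (meson dr.intros nxt_or singletonI)
    show "dr (insert (Nxt p) {Nxt ?t}) ?t"
      by (meson dr.intros insertI1 n1 ipc7)
    show "dr (insert (Nxt (Nxt (Dia p))) {Nxt ?t}) ?t"
      by (meson dr.intros insertI1 n2 ipc7)
  qed
  then have "prov (Imp (Nxt ?t) ?t)" by (rule dr_prov_imp)
  then have "prov (Imp (Dia ?t) ?t)" by (rule dia_ind)
  moreover have "prov (Imp (Dia p) (Dia ?t))" using dia_mono[OF ipc6] .
  ultimately show ?thesis using prov_trans by blast
qed

definition pth :: "fm set \<Rightarrow> bool" where
  "pth T \<longleftrightarrow> (\<forall>\<phi>. dr T \<phi> \<longrightarrow> \<phi> \<in> T) \<and> Bot \<notin> T \<and> (\<forall>a b. Or a b \<in> T \<longrightarrow> a \<in> T \<or> b \<in> T)"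

lemma lindenbaum:
  assumes "\<not> dr H \<phi>"
  shows "\<exists>T. pth T \<and> H \<subseteq> T \<and> \<phi> \<notin> T"
proof -
  let ?A = "{T. H \<subseteq> T \<and> \<not> dr T \<phi>}"
  have "\<exists>M\<in>?A. \<forall>X\<in>?A. M \<subseteq> X \<longrightarrow> X = M"
  proof (rule subset_Zorn_nonempty)
    show "?A \<noteq> {}" using assms by blast
  next
    fix C assume C: "C \<noteq> {}" "subset.chain ?A C"
    show "\<Union>C \<in> ?A"
    proof (safe)
      fix x assume "x \<in> H"
      moreover obtain X where "X \<in> C" using C(1) by blast
      ultimately show "x \<in> \<Union>C" using C(2) unfolding subset_chain_def by blast
    next
      assume "dr (\<Union>C) \<phi>"
      then obtain F where F: "finite F" "F \<subseteq> \<Union>C" "dr F \<phi>" using dr_compact by blast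
      then obtain B where "B \<in> C" "F \<subseteq> B" using finite_subset_Union_chain[OF F(1) F(2) C(1) C(2)] by blast
      then have "dr B \<phi>" using dr_mono F by blast
      then show False using \<open>B \<in> C\<close> C by (auto simp: subset_chain_def)
    qed
  qed
  then obtain M where M0: "M \<in> ?A" and max0: "\<forall>X\<in>?A. M \<subseteq> X \<longrightarrow> X = M"
    by (elim bexE)
  have M: "H \<subseteq> M" "\<not> dr M \<phi>" using M0 by auto
  have max: "X = M" if "H \<subseteq> X" "\<not> dr X \<phi>" "M \<subseteq> X" for X
    using max0 that by blast
  have ins: "dr (insert a M) \<phi>" if "a \<notin> M" for a
    using max[of "insert a M"] M that by blast
  have cl: "\<psi> \<in> M" if "dr M \<psi>" for \<psi>
  proof (rule ccontr)
    assume "\<psi> \<notin> M"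
    then have "dr M (Imp \<psi> \<phi>)" using ins dr_deduct by blast
    then show False using that M dr_mp by blast
  qed
  have "pth M"
    unfolding pth_def
  proof (intro conjI allI impI cl)
    show "Bot \<notin> M" using M by (meson dr.intros ipc9)
  next
    fix a b assume "Or a b \<in> M"
    then show "a \<in> M \<or> b \<in> M"
      using ins dr_or_elim[of M a b \<phi>] M dr_hyp by blast
  qed
  moreover have "\<phi> \<notin> M" using M dr_hyp by blast
  ultimately show ?thesis using M by blast
qed

lemma pth_prov: "pth T \<Longrightarrow> prov \<phi> \<Longrightarrow> \<phi> \<in> T"
  unfolding pth_def by (meson dr.intros)

lemma pth_mp: "pth T \<Longrightarrow> Imp a b \<in> T \<Longrightarrow> a \<in> T \<Longrightarrow> b \<in> T"
  unfolding pth_def by (meson dr.intros)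

lemma pth_pmp: "pth T \<Longrightarrow> prov (Imp a b) \<Longrightarrow> a \<in> T \<Longrightarrow> b \<in> T"
  using pth_prov pth_mp by blast

lemma pth_and: "pth T \<Longrightarrow> And a b \<in> T \<longleftrightarrow> a \<in> T \<and> b \<in> T"
  by (meson ipc3 ipc4 ipc5 pth_mp pth_pmp)

lemma pth_or: "pth T \<Longrightarrow> Or a b \<in> T \<longleftrightarrow> a \<in> T \<or> b \<in> T"
  by (meson ipc6 ipc7 pth_def pth_pmp)

lemma pth_bot: "pth T \<Longrightarrow> Bot \<notin> T"
  unfolding pth_def by blast

lemma pth_top: "pth T \<Longrightarrow> Top \<in> T"
  unfolding Top_def using pth_prov prov_id by blast

lemma pth_imp_witness:
  assumes "pth T" "Imp a b \<notin> T"
  shows "\<exists>T'. pth T' \<and> T \<subseteq> T' \<and> a \<in> T' \<and> b \<notin> T'"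
proof -
  have "\<not> dr (insert a T) b"
    using assms dr_deduct unfolding pth_def by blast
  then show ?thesis using lindenbaum by blast
qed

lemma complete: "(\<And>T. pth T \<Longrightarrow> \<phi> \<in> T) \<Longrightarrow> prov \<phi>"
  using lindenbaum[of "{}" \<phi>] dr_empty by blast

lemma complete_imp: "(\<And>T. pth T \<Longrightarrow> a \<in> T \<Longrightarrow> b \<in> T) \<Longrightarrow> prov (Imp a b)"
  apply (rule complete)
  using pth_imp_witness by blast

lemma pth_next: assumes "pth T" shows "pth {\<phi>. Nxt \<phi> \<in> T}"
proof -
  have "Nxt \<psi> \<in> T" if "dr {\<phi>. Nxt \<phi> \<in> T} \<psi>" for \<psi>
    using that
  proof (induction rule: dr.induct)
    case (dr_hyp \<phi>) then show ?case by simp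
  next
    case (dr_ax \<phi>) then show ?case using assms nec pth_prov by blast
  next
    case (dr_mp a b) then show ?case using assms nxt_imp pth_pmp pth_mp by blast
  qed
  moreover have "Nxt Bot \<notin> T" using assms pth_pmp nxt_bot pth_bot by blast
  moreover have "Nxt a \<in> T \<or> Nxt b \<in> T" if "Nxt (Or a b) \<in> T" for a b
    using that assms nxt_or pth_pmp pth_or by blast
  ultimately show ?thesis unfolding pth_def by auto
qed

lemma foldr_and: "pth T \<Longrightarrow> foldr And xs Top \<in> T \<longleftrightarrow> set xs \<subseteq> T"
  by (induction xs) (auto simp: pth_and pth_top)

lemma foldr_or: "pth T \<Longrightarrow> foldr Or xs Bot \<in> T \<longleftrightarrow> set xs \<inter> T \<noteq> {}"
  by (induction xs) (auto simp: pth_or pth_bot)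

lemma BigAnd_in: "pth T \<Longrightarrow> finite A \<Longrightarrow> BigAnd A \<in> T \<longleftrightarrow> A \<subseteq> T"
proof -
  assume "pth T" "finite A"
  then have "set (SOME xs. set xs = A) = A" using finite_list by (metis (mono_tags) someI_ex)
  then show ?thesis unfolding BigAnd_def using foldr_and \<open>pth T\<close> by metis
qed

lemma BigOr_in: "pth T \<Longrightarrow> finite A \<Longrightarrow> BigOr A \<in> T \<longleftrightarrow> A \<inter> T \<noteq> {}"
proof -
  assume "pth T" "finite A"
  then have "set (SOME xs. set xs = A) = A" using finite_list by (metis (mono_tags) someI_ex)
  then show ?thesis unfolding BigOr_def using foldr_or \<open>pth T\<close> by metis
qed


definition CP :: "(fm set \<times> fm set) set" where
  "CP = {(UNIV - T, T) | T. pth T}"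

definition Cf :: "(fm set \<times> fm set) kframe" where
  "Cf = \<lparr> pts = CP, le = (\<lambda>x y. x \<in> CP \<and> y \<in> CP \<and> snd x \<subseteq> snd y),
     rel = (\<lambda>x y. x \<in> CP \<and> y = (UNIV - {\<phi>. Nxt \<phi> \<in> snd x}, {\<phi>. Nxt \<phi> \<in> snd x})),
     lab = id \<rparr>"

lemma CP_iff: "x \<in> CP \<longleftrightarrow> pth (snd x) \<and> fst x = UNIV - snd x"
  unfolding CP_def by (cases x) auto

lemma Cf_simps: "pts Cf = CP" "le Cf x y \<longleftrightarrow> x \<in> CP \<and> y \<in> CP \<and> snd x \<subseteq> snd y"
  "rel Cf x y \<longleftrightarrow> x \<in> CP \<and> y = (UNIV - {\<phi>. Nxt \<phi> \<in> snd x}, {\<phi>. Nxt \<phi> \<in> snd x})"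
  "lab Cf x = x"
  unfolding Cf_def by auto

lemma CP_next: "x \<in> CP \<Longrightarrow> (UNIV - {\<phi>. Nxt \<phi> \<in> snd x}, {\<phi>. Nxt \<phi> \<in> snd x}) \<in> CP"
  using pth_next CP_iff by auto

lemma is_type_CP: "x \<in> CP \<Longrightarrow> is_type UNIV x"
proof -
  assume "x \<in> CP"
  then have T: "pth (snd x)" "fst x = UNIV - snd x" by (auto simp: CP_iff)
  show ?thesis unfolding is_type_def Let_def
  proof (intro conjI allI impI)
    show "fst x \<inter> snd x = {}" "fst x \<union> snd x = UNIV" using T(2) by auto
    show "Bot \<notin> snd x" using pth_bot[OF T(1)] .
    fix p q
    show "And p q \<in> snd x \<longleftrightarrow> p \<in> snd x \<and> q \<in> snd x" using pth_and[OF T(1)] .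
    show "Or p q \<in> snd x \<longleftrightarrow> p \<in> snd x \<or> q \<in> snd x" using pth_or[OF T(1)] .
  next
    fix p q assume "Imp p q \<in> snd x"
    then show "p \<in> fst x \<or> q \<in> snd x" using pth_mp[OF T(1)] T(2) by blast
  next
    fix p assume "Dia p \<in> fst x"
    then show "p \<in> fst x" using pth_pmp[OF T(1) prov_dia_intro] T(2) by blast
  qed
qed

lemma Cf_weak: "weak_qm UNIV Cf"
  unfolding weak_qm_def labelled_frame_def forward_confluent_rel_def
proof (intro conjI allI impI ballI)
  fix x y assume "le Cf x y" then show "x \<in> pts Cf" "y \<in> pts Cf" by (auto simp: Cf_simps)
next
  fix x assume "x \<in> pts Cf" then show "le Cf x x" by (auto simp: Cf_simps)
next
  fix x y z assume "le Cf x y \<and> le Cf y z" then show "le Cf x z" by (auto simp: Cf_simps)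
next
  fix x y assume "le Cf x y \<and> le Cf y x" then show "x = y"
    by (auto simp: Cf_simps CP_iff prod_eq_iff)
next
  fix w assume "w \<in> pts Cf" then show "is_type UNIV (lab Cf w)" by (simp add: Cf_simps is_type_CP)
next
  fix w v assume "le Cf w v" then show "snd (lab Cf w) \<subseteq> snd (lab Cf v)" by (simp add: Cf_simps)
next
  fix w p q assume w: "w \<in> pts Cf" and "Imp p q \<in> fst (lab Cf w)"
  then have "Imp p q \<notin> snd w" "pth (snd w)" by (auto simp: Cf_simps CP_iff)
  then obtain T' where T': "pth T'" "snd w \<subseteq> T'" "p \<in> T'" "q \<notin> T'" using pth_imp_witness by blast
  then show "\<exists>v\<in>pts Cf. le Cf w v \<and> p \<in> snd (lab Cf v) \<and> q \<in> fst (lab Cf v)"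
    using w by (intro bexI[of _ "(UNIV - T', T')"]) (auto simp: Cf_simps CP_def)
next
  fix x y assume "rel Cf x y" then show "x \<in> pts Cf" "y \<in> pts Cf" by (auto simp: Cf_simps CP_next)
next
  fix w w' v assume "le Cf w w' \<and> rel Cf w v"
  then show "\<exists>v'\<in>pts Cf. le Cf v v' \<and> rel Cf w' v'"
    by (intro bexI[of _ "(UNIV - {\<phi>. Nxt \<phi> \<in> snd w'}, {\<phi>. Nxt \<phi> \<in> snd w'})"])
       (auto simp: Cf_simps CP_next)
next
  fix w v assume r: "rel Cf w v"
  then have w: "pth (snd w)" "fst w = UNIV - snd w" by (auto simp: Cf_simps CP_iff)
  have unf: "Or p (Nxt (Dia p)) \<in> snd w" if "Dia p \<in> snd w" for p
    using pth_pmp[OF w(1) prov_dia_unfold that] .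
  show "sensT (lab Cf w) (lab Cf v)"
    unfolding sensT_def using r w unf pth_or[OF w(1)] pth_pmp[OF w(1) prov_dia_intro]
      pth_pmp[OF w(1) prov_trans[OF ipc7 dia_fix]]
    by (auto simp: Cf_simps)
qed

lemma Cf_det: "deterministic Cf"
  unfolding deterministic_def by (auto simp: Cf_simps)

definition ss :: "'w kframe \<Rightarrow> 'w \<Rightarrow> 'w set" where
  "ss F u = {v\<in>pts F. le F u v \<and> v \<noteq> u}"

lemma simf_Suc: "simf F (Suc n) w = Imp (BigAnd (snd (lab F w)))
     (Or (BigOr (fst (lab F w))) (BigOr (simf F n ` ss F w)))"
  by (simp add: ss_def)

lemma ss_card:
  assumes "labelled_frame \<Sigma> F" "finite (pts F)" "v \<in> ss F u"
  shows "card (ss F v) < card (ss F u)"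
proof (rule psubset_card_mono)
  show "finite (ss F u)" using assms(2) by (simp add: ss_def)
  have "ss F v \<subseteq> ss F u" using assms unfolding ss_def labelled_frame_def by blast
  moreover have "v \<in> ss F u" "v \<notin> ss F v" using assms by (auto simp: ss_def)
  ultimately show "ss F v \<subset> ss F u" by blast
qed

lemma simf_stable:
  assumes "labelled_frame \<Sigma> F" "finite (pts F)"
  shows "card (ss F u) < n \<Longrightarrow> card (ss F u) < m \<Longrightarrow> simf F n u = simf F m u"
proof (induction "card (ss F u)" arbitrary: u n m rule: less_induct)
  case less
  obtain n' where n: "n = Suc n'" using less(2) by (cases n) auto
  obtain m' where m: "m = Suc m'" using less(3) by (cases m) auto
  have "simf F n' v = simf F m' v" if "v \<in> ss F u" for v
    using less(1)[of v n' m'] ss_card[OF assms that] less(2,3) n m by simp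
  then have eq: "simf F n' ` ss F u = simf F m' ` ss F u" by (rule image_cong[OF refl])
  show ?case unfolding n m simf_Suc eq ..
qed

lemma ss_lt:
  assumes "finite (pts F)" "u \<in> pts F" shows "card (ss F u) < card (pts F)"
proof -
  have "ss F u \<subseteq> pts F - {u}" by (auto simp: ss_def)
  then have "card (ss F u) \<le> card (pts F - {u})" using assms by (intro card_mono) auto
  also have "\<dots> < card (pts F)" using assms by (rule card_Diff1_less)
  finally show ?thesis .
qed

lemma Sim_unfold:
  assumes "labelled_frame \<Sigma> F" "finite (pts F)" "u \<in> pts F"
  shows "Sim F u = Imp (BigAnd (snd (lab F u))) (Or (BigOr (fst (lab F u))) (BigOr (Sim F ` ss F u)))"
proof -
  have lt: "card (ss F u) < card (pts F)" using ss_lt assms(2,3) .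
  then obtain k where k: "card (pts F) = Suc k" by (cases "card (pts F)") auto
  have "simf F k v = Sim F v" if "v \<in> ss F u" for v
    unfolding Sim_def
  proof (rule simf_stable[OF assms(1,2)])
    show "card (ss F v) < k" using ss_card[OF assms(1,2) that] lt k by linarith
    show "card (ss F v) < card (pts F)" using ss_card[OF assms(1,2) that] lt k by linarith
  qed
  then have "simf F k ` ss F u = Sim F ` ss F u" by (rule image_cong[OF refl])
  then have eq: "simf F k ` ss F u = Sim F ` ss F u" .
  have "Sim F u = simf F (Suc k) u" unfolding Sim_def k ..
  also have "\<dots> = Imp (BigAnd (snd (lab F u))) (Or (BigOr (fst (lab F u))) (BigOr (simf F k ` ss F u)))"
    by (rule simf_Suc)
  also have "\<dots> = Imp (BigAnd (snd (lab F u))) (Or (BigOr (fst (lab F u))) (BigOr (Sim F ` ss F u)))"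
    by (simp only: eq)
  finally show ?thesis .
qed

lemma type_fin:
  assumes "finite \<Sigma>" "is_type \<Sigma> t" shows "finite (fst t)" "finite (snd t)"
proof -
  have "fst t \<union> snd t = \<Sigma>" using assms(2) unfolding is_type_def Let_def by blast
  then show "finite (fst t)" "finite (snd t)" using assms(1) by (metis finite_Un)+
qed

lemma M1:
  assumes lf: "labelled_frame \<Sigma> I" and fin: "finite (pts I)" and fS: "finite \<Sigma>"
    and E: "is_simulation I Cf E"
  shows "E u z \<Longrightarrow> Sim I u \<notin> snd z"
proof (induction "card (ss I u)" arbitrary: u z rule: less_induct)
  case less
  have u: "u \<in> pts I" and z: "z \<in> CP" using E less(2) unfolding is_simulation_def Cf_simps(1) by blast+
  have T: "pth (snd z)" "fst z = UNIV - snd z" using z CP_iff by auto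
  have sub: "subT (lab I u) z" using E less(2) unfolding is_simulation_def Cf_simps(4) by blast
  have ty: "is_type \<Sigma> (lab I u)" using lf u unfolding labelled_frame_def by blast
  have finss: "finite (ss I u)" using fin by (simp add: ss_def)
  show ?case
  proof
    assume S: "Sim I u \<in> snd z"
    have "BigAnd (snd (lab I u)) \<in> snd z"
      using BigAnd_in[OF T(1) type_fin(2)[OF fS ty]] sub unfolding subT_def by blast
    moreover have "Imp (BigAnd (snd (lab I u))) (Or (BigOr (fst (lab I u))) (BigOr (Sim I ` ss I u))) \<in> snd z"
        using S unfolding Sim_unfold[OF lf fin u] .
    ultimately have "Or (BigOr (fst (lab I u))) (BigOr (Sim I ` ss I u)) \<in> snd z"
      using pth_mp[OF T(1)] by blast
    then have "BigOr (fst (lab I u)) \<in> snd z \<or> BigOr (Sim I ` ss I u) \<in> snd z"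
      using pth_or[OF T(1)] by blast
    then show False
    proof
      assume "BigOr (fst (lab I u)) \<in> snd z"
      then have "fst (lab I u) \<inter> snd z \<noteq> {}" using BigOr_in[OF T(1) type_fin(1)[OF fS ty]] by blast
      moreover have "fst (lab I u) \<subseteq> fst z" using sub unfolding subT_def by blast
      ultimately show False using T(2) by blast
    next
      assume "BigOr (Sim I ` ss I u) \<in> snd z"
      then obtain v where v: "v \<in> ss I u" "Sim I v \<in> snd z"
        using BigOr_in[OF T(1)] finss by blast
      then have "le I u v" by (simp add: ss_def)
      then obtain z' where z': "le Cf z z'" "E v z'" using E less(2) unfolding is_simulation_def by blast
      then have "Sim I v \<in> snd z'" using v by (simp add: Cf_simps) blast
      then show False using less(1)[OF ss_card[OF lf fin v(1)] z'(2)] by blast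
    qed
  qed
qed

definition E0 :: "'w kframe \<Rightarrow> 'w \<Rightarrow> fm set \<times> fm set \<Rightarrow> bool" where
  "E0 I u z \<longleftrightarrow> u \<in> pts I \<and> z \<in> CP \<and> snd (lab I u) \<subseteq> snd z \<and> fst (lab I u) \<inter> snd z = {}
     \<and> (\<forall>v\<in>ss I u. Sim I v \<notin> snd z)"

lemma M2core:
  assumes lf: "labelled_frame \<Sigma> I" and fin: "finite (pts I)" and fS: "finite \<Sigma>"
    and u: "u \<in> pts I" and z: "z \<in> CP" and S: "Sim I u \<notin> snd z"
  shows "\<exists>z'\<in>CP. snd z \<subseteq> snd z' \<and> E0 I u z'"
proof -
  have T: "pth (snd z)" using z CP_iff by auto
  have ty: "is_type \<Sigma> (lab I u)" using lf u unfolding labelled_frame_def by blast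
  have finss: "finite (ss I u)" using fin by (simp add: ss_def)
  obtain T' where T': "pth T'" "snd z \<subseteq> T'" "BigAnd (snd (lab I u)) \<in> T'"
     "Or (BigOr (fst (lab I u))) (BigOr (Sim I ` ss I u)) \<notin> T'"
    using pth_imp_witness[OF T] S unfolding Sim_unfold[OF lf fin u] by blast
  then have "snd (lab I u) \<subseteq> T'" "fst (lab I u) \<inter> T' = {}" "\<forall>v\<in>ss I u. Sim I v \<notin> T'"
    using BigAnd_in[OF T'(1) type_fin(2)[OF fS ty]] BigOr_in[OF T'(1) type_fin(1)[OF fS ty]]
      BigOr_in[OF T'(1)] finss pth_or[OF T'(1)] by blast+
  then show ?thesis using T' u
    by (intro bexI[of _ "(UNIV - T', T')"]) (auto simp: E0_def CP_def)
qed

lemma E0_sim: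
  assumes lf: "labelled_frame \<Sigma> I" and fin: "finite (pts I)" and fS: "finite \<Sigma>"
  shows "is_simulation I Cf (E0 I)"
  unfolding is_simulation_def
proof (intro conjI allI impI)
  fix x y assume "E0 I x y" then show "x \<in> pts I" "y \<in> pts Cf" by (simp_all add: E0_def Cf_simps)
next
  fix x x' y assume a: "E0 I x y \<and> le I x x'"
  show "\<exists>y'\<in>pts Cf. le Cf y y' \<and> E0 I x' y'"
  proof (cases "x' = x")
    case True then show ?thesis using a by (auto simp: Cf_simps E0_def)
  next
    case False
    then have "x' \<in> ss I x" using a lf unfolding ss_def labelled_frame_def by blast
    then have "Sim I x' \<notin> snd y" "x' \<in> pts I" "y \<in> CP" using a by (auto simp: E0_def ss_def)
    then show ?thesis using M2core[OF lf fin fS] by (fastforce simp: Cf_simps)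
  qed
next
  fix x y assume "E0 I x y" then show "subT (lab I x) (lab Cf y)"
    by (auto simp: E0_def subT_def Cf_simps CP_iff)
qed

lemma P_iff:
  assumes lf: "labelled_frame \<Sigma> I" and fin: "finite (pts I)" and fS: "finite \<Sigma>" and u: "u \<in> pts I"
  shows "\<not> prov (Sim I u) \<longleftrightarrow> (\<exists>z. simulates I Cf u z)"
proof
  assume "\<not> prov (Sim I u)"
  then obtain T where "pth T" "Sim I u \<notin> T" using complete by blast
  then have "(UNIV - T, T) \<in> CP" "Sim I u \<notin> snd (UNIV - T, T)" by (auto simp: CP_def)
  then obtain z' where "E0 I u z'" using M2core[OF lf fin fS u] by blast
  then show "\<exists>z. simulates I Cf u z" using E0_sim[OF lf fin fS] unfolding simulates_def by blast
next
  assume "\<exists>z. simulates I Cf u z"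
  then obtain E z where "is_simulation I Cf E" "E u z" unfolding simulates_def by blast
  moreover then have "z \<in> CP" unfolding is_simulation_def Cf_simps(1) by blast
  ultimately show "\<not> prov (Sim I u)" using M1[OF lf fin fS] pth_prov CP_iff by blast
qed


lemma subf_self: "\<phi> \<in> subf \<phi>"
  by (cases \<phi>) auto

lemma restrict_simps: "pts (restrict_frame F P) = P"
  "le (restrict_frame F P) x y \<longleftrightarrow> x \<in> P \<and> y \<in> P \<and> le F x y"
  "rel (restrict_frame F P) x y \<longleftrightarrow> x \<in> P \<and> y \<in> P \<and> rel F x y"
  "lab (restrict_frame F P) = lab F"
  by (simp_all add: restrict_frame_def)

theorem corollary7p4:
  fixes \<Sigma> :: "fm set" and I :: "'a kframe"
  assumes "finite \<Sigma>" and "sub_closed \<Sigma>"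
    and "finite (pts I)" and "weak_qm \<Sigma> I"
    and "\<forall>A :: (fm set \<times> fm set) kframe. weak_qm UNIV A \<and> deterministic A \<longrightarrow>
           is_simulation I A (simulates I A) \<and> dynamic I A (simulates I A)
           \<and> surjective_sim I A (simulates I A)"
  shows "quasimodel \<Sigma> (restrict_frame I {w \<in> pts I. \<not> prov (Sim I w)})
         \<and> finite {w \<in> pts I. \<not> prov (Sim I w)}"
proof -
  note fS = assms(1) and sc = assms(2) and fin = assms(3) and wq = assms(4)
  have lf: "labelled_frame \<Sigma> I" using wq unfolding weak_qm_def by blast
  have lf': "\<forall>x y. le I x y \<longrightarrow> x \<in> pts I \<and> y \<in> pts I"
     "\<forall>x\<in>pts I. le I x x"
     "\<forall>x y z. le I x y \<and> le I y z \<longrightarrow> le I x z"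
     "\<forall>x y. le I x y \<and> le I y x \<longrightarrow> x = y"
     "\<forall>w\<in>pts I. is_type \<Sigma> (lab I w)"
     "\<forall>w v. le I w v \<longrightarrow> snd (lab I w) \<subseteq> snd (lab I v)"
     "\<forall>w\<in>pts I. \<forall>p q. Imp p q \<in> fst (lab I w) \<longrightarrow>
         (\<exists>v\<in>pts I. le I w v \<and> p \<in> snd (lab I v) \<and> q \<in> fst (lab I v))"
    using lf unfolding labelled_frame_def by blast+
  have relpts: "\<forall>x y. rel I x y \<longrightarrow> x \<in> pts I \<and> y \<in> pts I"
    and fc: "forward_confluent_rel I"
    and sens: "\<forall>w v. rel I w v \<longrightarrow> sensT (lab I w) (lab I v)"
    using wq unfolding weak_qm_def by blast+
  have hC: "is_simulation I Cf (simulates I Cf)" "dynamic I Cf (simulates I Cf)"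
    using assms(5) Cf_weak Cf_det by blast+
  define P where "P = {w \<in> pts I. \<not> prov (Sim I w)}"
  define R where "R = restrict_frame I P"
  have Pchar: "w \<in> P \<longleftrightarrow> w \<in> pts I \<and> (\<exists>z. simulates I Cf w z)" for w
    unfolding P_def using P_iff[OF lf fin fS] by blast
  note hC1 = hC(1)[unfolded is_simulation_def, THEN conjunct1]
    hC(1)[unfolded is_simulation_def, THEN conjunct2, THEN conjunct1]
    hC(1)[unfolded is_simulation_def, THEN conjunct2, THEN conjunct2]
  have simpts: "w \<in> pts I \<and> z \<in> CP" if "simulates I Cf w z" for w z
    using hC1(1)[rule_format, OF that] by (simp add: Cf_simps)
  have up: "w' \<in> P" if wP: "w \<in> P" and wle: "le I w w'" for w w'
  proof -
    obtain z where z: "simulates I Cf w z" using wP Pchar[of w] by blast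
    obtain z' where "simulates I Cf w' z'" using hC1(2)[rule_format, OF conjI[OF z wle]] by blast
    then show ?thesis using Pchar[of w'] simpts[of w' z'] by blast
  qed
  have PI: "P \<subseteq> pts I" unfolding P_def by blast
  have M1': "Sim I u \<notin> snd z" if "simulates I Cf u z" for u z
    using M1[OF lf fin fS hC(1) that] .
  have dyn: "\<exists>x'. rel I u x' \<and> simulates I Cf x' z'" if "simulates I Cf u z" "rel Cf z z'" for u z z'
    using hC(2) that unfolding dynamic_def by blast
  have wqR: "weak_qm \<Sigma> R"
    unfolding weak_qm_def labelled_frame_def forward_confluent_rel_def R_def restrict_simps
  proof (intro conjI allI impI ballI)
    fix w p q assume "w \<in> P" "Imp p q \<in> fst (lab I w)"
    then obtain v where "v \<in> pts I" "le I w v" "p \<in> snd (lab I v)" "q \<in> fst (lab I v)"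
      using lf'(7) PI by blast
    then show "\<exists>v\<in>P. (w \<in> P \<and> v \<in> P \<and> le I w v) \<and> p \<in> snd (lab I v) \<and> q \<in> fst (lab I v)"
      using up \<open>w \<in> P\<close> by blast
  next
    fix w w' v assume a: "(w \<in> P \<and> w' \<in> P \<and> le I w w') \<and> w \<in> P \<and> v \<in> P \<and> rel I w v"
    then obtain v' where "v' \<in> pts I" "le I v v'" "rel I w' v'" using fc unfolding forward_confluent_rel_def by blast
    then show "\<exists>v'\<in>P. (v \<in> P \<and> v' \<in> P \<and> le I v v') \<and> w' \<in> P \<and> v' \<in> P \<and> rel I w' v'"
      using up a by blast
  qed (use lf' PI sens in blast)+
  have serial: "\<exists>v. rel R w v" if "w \<in> pts R" for w
  proof -
    have w: "w \<in> P" using that by (simp add: R_def restrict_simps)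
    then obtain z where z: "simulates I Cf w z" using Pchar[of w] by blast
    then have "z \<in> CP" using simpts by blast
    then have "rel Cf z (UNIV - {\<phi>. Nxt \<phi> \<in> snd z}, {\<phi>. Nxt \<phi> \<in> snd z})" by (simp add: Cf_simps)
    then obtain x' where "rel I w x'" "simulates I Cf x' (UNIV - {\<phi>. Nxt \<phi> \<in> snd z}, {\<phi>. Nxt \<phi> \<in> snd z})"
      using dyn z by blast
    moreover then have "x' \<in> P" using Pchar[of x'] relpts[rule_format, of w x'] by blast
    ultimately show ?thesis using w by (auto simp: R_def restrict_simps)
  qed
  have omega: "\<exists>n v. (rel R ^^ n) w v \<and> p \<in> snd (lab R v)"
    if wR: "w \<in> pts R" and dp: "Dia p \<in> snd (lab R w)" for w p
  proof (rule ccontr)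
    assume neg: "\<not> ?thesis"
    have w: "w \<in> P" using wR by (simp add: R_def restrict_simps)
    have labR: "lab R = lab I" by (simp add: R_def restrict_simps)
    define Rs where "Rs = {u. \<exists>n. (rel R ^^ n) w u}"
    have RsP: "Rs \<subseteq> P"
    proof
      fix u assume "u \<in> Rs"
      then obtain n where n: "(rel R ^^ n) w u" unfolding Rs_def by blast
      show "u \<in> P"
      proof (cases n)
        case 0 then show ?thesis using n w by simp
      next
        case (Suc m)
        then obtain y where "rel R y u" using n relpowp_Suc_E by metis
        then show ?thesis by (simp add: R_def restrict_simps)
      qed
    qed
    have wRs: "w \<in> Rs" unfolding Rs_def mem_Collect_eq by (rule exI[of _ 0]) simp
    have RsI: "Rs \<subseteq> pts I" using RsP PI by (rule order_trans)
    have finRs: "finite Rs" using finite_subset[OF RsI fin] .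
    have notp: "p \<notin> snd (lab I u)" if uR: "u \<in> Rs" for u
    proof
      assume pu: "p \<in> snd (lab I u)"
      obtain n where "(rel R ^^ n) w u" using uR unfolding Rs_def by blast
      then show False using neg pu labR by auto
    qed
    have pS: "p \<in> \<Sigma>"
    proof -
      have "is_type \<Sigma> (lab I w)" using lf'(5) w PI by blast
      then have "fst (lab I w) \<union> snd (lab I w) = \<Sigma>" unfolding is_type_def Let_def by blast
      moreover have "Dia p \<in> snd (lab I w)" using dp labR by simp
      ultimately have "Dia p \<in> \<Sigma>" by blast
      then show ?thesis using sc subf_self unfolding sub_closed_def by fastforce
    qed
    define \<theta> where "\<theta> = BigAnd (Sim I ` Rs)"
    have th_in: "\<theta> \<in> T \<longleftrightarrow> (\<forall>u\<in>Rs. Sim I u \<in> T)" if "pth T" for T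
      unfolding \<theta>_def using BigAnd_in[OF that] finRs by blast
    have a: "\<theta> \<in> T" if T: "pth T" "p \<in> T" for T
      unfolding th_in[OF T(1)]
    proof (rule ballI, rule ccontr)
      fix u assume u: "u \<in> Rs" "Sim I u \<notin> T"
      have "(UNIV - T, T) \<in> CP" using T by (auto simp: CP_def)
      moreover have "u \<in> pts I" using u(1) RsI by blast
      moreover have "Sim I u \<notin> snd (UNIV - T, T)" using u(2) by simp
      ultimately obtain z' where z': "z' \<in> CP" "T \<subseteq> snd z'" "E0 I u z'"
        using M2core[OF lf fin fS] by fastforce
      then have "p \<notin> fst (lab I u)" using T(2) unfolding E0_def by blast
      moreover have "is_type \<Sigma> (lab I u)" using lf'(5) u(1) RsI by blast
      ultimately have "p \<in> snd (lab I u)" using pS unfolding is_type_def Let_def by blast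
      then show False using notp u by blast
    qed
    have b: "\<theta> \<in> T" if T: "pth T" "Nxt \<theta> \<in> T" for T
      unfolding th_in[OF T(1)]
    proof (rule ballI, rule ccontr)
      fix u assume u: "u \<in> Rs" "Sim I u \<notin> T"
      have "(UNIV - T, T) \<in> CP" using T by (auto simp: CP_def)
      moreover have "u \<in> pts I" using u(1) RsI by blast
      moreover have "Sim I u \<notin> snd (UNIV - T, T)" using u(2) by simp
      ultimately obtain z' where z': "z' \<in> CP" "T \<subseteq> snd z'" "E0 I u z'"
        using M2core[OF lf fin fS] by fastforce
      then have sz: "simulates I Cf u z'" using E0_sim[OF lf fin fS] unfolding simulates_def by blast
      define z'' where "z'' = (UNIV - {\<phi>. Nxt \<phi> \<in> snd z'}, {\<phi>. Nxt \<phi> \<in> snd z'})"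
      have rz: "rel Cf z' z''" using z' by (simp add: Cf_simps z''_def)
      have z''C: "z'' \<in> CP" using CP_next[OF z'(1)] z''_def by simp
      have thz: "\<theta> \<in> snd z''" using T(2) z'(2) z''_def by auto
      obtain x' where x': "rel I u x'" "simulates I Cf x' z''" using dyn[OF sz rz] by blast
      have "x' \<in> P" using x' Pchar[of x'] relpts[rule_format, of u x'] by blast
      moreover have "u \<in> P" using u RsP by blast
      ultimately have "rel R u x'" using x' by (simp add: R_def restrict_simps)
      moreover obtain n where "(rel R ^^ n) w u" using u(1) unfolding Rs_def by blast
      ultimately have "(rel R ^^ Suc n) w x'" by (rule relpowp_Suc_I[rotated])
      then have "x' \<in> Rs" unfolding Rs_def by blast
      moreover have "pth (snd z'')" using z''C CP_iff by blast
      ultimately have "Sim I x' \<in> snd z''" using thz th_in by blast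
      then show False using M1'[OF x'(2)] by blast
    qed
    have "prov (Imp (Nxt \<theta>) \<theta>)" using complete_imp b by blast
    then have "prov (Imp (Dia \<theta>) \<theta>)" by (rule dia_ind)
    moreover have "prov (Imp (Dia p) (Dia \<theta>))" using complete_imp a dia_mono by blast
    moreover obtain z0 where z0: "simulates I Cf w z0" using w Pchar[of w] by blast
    moreover have z0C: "z0 \<in> CP" using simpts[OF z0] by blast
    moreover have "Dia p \<in> snd z0"
    proof -
      have "subT (lab I w) z0" using hC1(3)[rule_format, OF z0] unfolding Cf_simps(4) .
      moreover have "Dia p \<in> snd (lab I w)" using dp labR by simp
      ultimately show ?thesis unfolding subT_def by blast
    qed
    ultimately have "\<theta> \<in> snd z0" using pth_pmp CP_iff by (meson prov_trans)
    moreover have "pth (snd z0)" using z0C CP_iff by blast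
    ultimately have "Sim I w \<in> snd z0" using th_in wRs by blast
    then show False using M1'[OF z0] by blast
  qed
  have "quasimodel \<Sigma> R" unfolding quasimodel_def using wqR serial omega by blast
  moreover have "finite P" using finite_subset[OF PI fin] .
  ultimately show ?thesis unfolding R_def P_def by blast
qed

end
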